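(* Let $d\ge 1$ be an integer and for $s\ge 1$ let $N_d(s)$ denote the number of $(s,s+1)$-core partitions with $d$-distinct parts. Then $N_d(s)=s$ for $1\le s\le d+1$, and for all $s\ge d+2$, $$N_d(s)=N_d(s-1)+N_d(s-(d+1)).$$
   Context: A partition $\lambda=(\lambda_1,\ldots,\lambda_l)$ is a finite nonincreasing sequence of positive integers (the empty partition is allowed and counted). $\lambda$ is a partition with $d$-distinct parts if $\lambda_i-\lambda_{i+1}\ge d$ for all $1\le i\le l-1$. In the Young diagram of $\lambda$, the hook length of box $(i,j)$ is the number of boxes directly to its right, plus the number directly below it, plus one. $\lambda$ is an $(s,s+1)$-core partition if no box has hook length $s$ or $s+1$. *)

theory Defs
  imports Main
begin

text \<open>A partition is a finite nonincreasing list of positive integers (the empty list is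
the empty partition). Rows and columns of the Young diagram are indexed from 0.\<close>

definition is_partition :: "nat list \<Rightarrow> bool" where
  "is_partition lam \<longleftrightarrow> sorted_wrt (\<ge>) lam \<and> (\<forall>x\<in>set lam. 0 < x)"

definition d_distinct :: "nat \<Rightarrow> nat list \<Rightarrow> bool" where
  "d_distinct d lam \<longleftrightarrow> (\<forall>i. i + 1 < length lam \<longrightarrow> lam ! (i + 1) + d \<le> lam ! i)"

definition in_diagram :: "nat list \<Rightarrow> nat \<Rightarrow> nat \<Rightarrow> bool" where
  "in_diagram lam i j \<longleftrightarrow> i < length lam \<and> j < lam ! i"

text \<open>Hook length of box (i,j): boxes to the right (arm) + boxes below (leg) + 1.\<close>
definition hook :: "nat list \<Rightarrow> nat \<Rightarrow> nat \<Rightarrow> nat" where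
  "hook lam i j = (lam ! i - (j + 1)) + card {k. i < k \<and> k < length lam \<and> j < lam ! k} + 1"

definition no_hook :: "nat list \<Rightarrow> nat \<Rightarrow> bool" where
  "no_hook lam t \<longleftrightarrow> (\<forall>i j. in_diagram lam i j \<longrightarrow> hook lam i j \<noteq> t)"

definition is_core_pair :: "nat \<Rightarrow> nat list \<Rightarrow> bool" where
  "is_core_pair s lam \<longleftrightarrow> no_hook lam s \<and> no_hook lam (s + 1)"

definition N :: "nat \<Rightarrow> nat \<Rightarrow> nat" where
  "N d s = card {lam. is_partition lam \<and> d_distinct d lam \<and> is_core_pair s lam}"

end

theory Submission
  imports Defs
begin

definition V :: "nat \<Rightarrow> nat list \<Rightarrow> bool" where
  "V d lam \<longleftrightarrow> is_partition lam \<and> d_distinct d lam"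

definition C :: "nat \<Rightarrow> nat \<Rightarrow> nat list set" where
  "C d s = {lam. V d lam \<and> (lam = [] \<or> hd lam + length lam \<le> s)}"

lemma strict:
  assumes "1 \<le> d" "d_distinct d lam" "i < k" "k < length lam"
  shows "lam ! k < lam ! i"
  using assms(3,4)
proof (induction k)
  case 0 then show ?case by simp
next
  case (Suc k)
  have "k + 1 < length lam" using Suc.prems by simp
  then have "lam ! (k + 1) + d \<le> lam ! k" using assms(2) unfolding d_distinct_def by blast
  then have st: "lam ! Suc k < lam ! k" using assms(1) by simp
  show ?case
  proof (cases "i = k")
    case True then show ?thesis using st by simp
  next
    case False
    then have "lam ! k < lam ! i" using Suc by simp
    then show ?thesis using st by simp
  qed
qed

lemma pos: "is_partition lam \<Longrightarrow> k < length lam \<Longrightarrow> 0 < lam ! k"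
  unfolding is_partition_def using nth_mem by blast

lemma V_Cons: "V d (a # mu) \<longleftrightarrow> V d mu \<and> 0 < a \<and> (mu \<noteq> [] \<longrightarrow> hd mu + d \<le> a)"
proof
  assume h: "V d (a # mu)"
  then have p: "is_partition (a # mu)" and dd: "d_distinct d (a # mu)" by (auto simp: V_def)
  have "is_partition mu" "0 < a" using p by (auto simp: is_partition_def)
  moreover have "d_distinct d mu"
    unfolding d_distinct_def
  proof (intro allI impI)
    fix i assume "i + 1 < length mu"
    then have "Suc i + 1 < length (a # mu)" by simp
    then have "(a # mu) ! (Suc i + 1) + d \<le> (a # mu) ! Suc i" using dd unfolding d_distinct_def by blast
    then show "mu ! (i + 1) + d \<le> mu ! i" by simp
  qed
  moreover have "mu \<noteq> [] \<longrightarrow> hd mu + d \<le> a"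
  proof
    assume "mu \<noteq> []"
    then have "0 + 1 < length (a # mu)" by simp
    then have "(a#mu) ! (0 + 1) + d \<le> (a#mu) ! 0" using dd unfolding d_distinct_def by blast
    then show "hd mu + d \<le> a" using \<open>mu \<noteq> []\<close> by (simp add: hd_conv_nth)
  qed
  ultimately show "V d mu \<and> 0 < a \<and> (mu \<noteq> [] \<longrightarrow> hd mu + d \<le> a)" by (simp add: V_def)
next
  assume h: "V d mu \<and> 0 < a \<and> (mu \<noteq> [] \<longrightarrow> hd mu + d \<le> a)"
  then have p: "is_partition mu" and dd: "d_distinct d mu" and a: "0 < a"
    and hd: "mu \<noteq> [] \<Longrightarrow> hd mu + d \<le> a" by (auto simp: V_def)
  have le: "\<forall>y\<in>set mu. y \<le> a"
  proof
    fix y assume y: "y \<in> set mu"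
    then have ne: "mu \<noteq> []" by auto
    obtain b rest where mu: "mu = b # rest" using ne by (cases mu) auto
    have "y \<le> b" using y p unfolding mu is_partition_def by auto
    then show "y \<le> a" using hd[OF ne] unfolding mu by simp
  qed
  have "is_partition (a # mu)" using p a le by (auto simp: is_partition_def)
  moreover have "d_distinct d (a # mu)"
    unfolding d_distinct_def
  proof (intro allI impI)
    fix i assume i: "i + 1 < length (a # mu)"
    show "(a # mu) ! (i + 1) + d \<le> (a # mu) ! i"
    proof (cases i)
      case 0
      then have "mu \<noteq> []" using i by auto
      then show ?thesis using hd 0 by (simp add: hd_conv_nth)
    next
      case (Suc i')
      then have "i' + 1 < length mu" using i by simp
      then show ?thesis using dd Suc unfolding d_distinct_def by simp
    qed
  qed
  ultimately show "V d (a # mu)" by (simp add: V_def)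
qed

lemma discrete:
  fixes f :: "nat \<Rightarrow> nat"
  shows "(\<forall>j<m. f j \<le> f (Suc j) + 2) \<Longrightarrow> s \<le> f 0 \<Longrightarrow> f m \<le> s \<Longrightarrow> \<exists>j\<le>m. f j = s \<or> f j = Suc s"
proof (induction m)
  case 0 then show ?case by auto
next
  case (Suc m)
  show ?case
  proof (cases "f m \<le> s")
    case True
    then show ?thesis using Suc by (metis le_SucI less_SucI)
  next
    case False
    show ?thesis
    proof (cases "f (Suc m) = s")
      case True then show ?thesis by blast
    next
      case False2: False
      have "f m \<le> f (Suc m) + 2" using Suc.prems(1) by simp
      then have "f m = Suc s" using False False2 Suc.prems(3) by linarith
      then show ?thesis by (metis le_SucI order_refl)
    qed
  qed
qed

lemma hook_bound:
  assumes d: "1 \<le> d" and V: "V d lam" and ij: "in_diagram lam i j"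
  shows "hook lam i j + 1 \<le> lam ! 0 + length lam"
proof -
  have dd: "d_distinct d lam" using V by (simp add: V_def)
  have i: "i < length lam" and j: "j < lam ! i" using ij by (auto simp: in_diagram_def)
  have li: "lam ! i \<le> lam ! 0"
    using strict[OF d dd, of 0 i] i by (cases "i = 0") auto
  have "{k. i < k \<and> k < length lam \<and> j < lam ! k} \<subseteq> {i<..<length lam}" by auto
  then have "card {k. i < k \<and> k < length lam \<and> j < lam ! k} \<le> length lam - Suc i"
    using card_mono[of "{i<..<length lam}"] by fastforce
  then show ?thesis using i j li unfolding hook_def by linarith
qed

lemma core_char:
  assumes d: "1 \<le> d" and V: "V d lam" and s: "1 \<le> s"
  shows "is_core_pair s lam \<longleftrightarrow> (lam = [] \<or> hd lam + length lam \<le> s)"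
proof
  assume core: "is_core_pair s lam"
  show "lam = [] \<or> hd lam + length lam \<le> s"
  proof (rule ccontr)
    assume "\<not> (lam = [] \<or> hd lam + length lam \<le> s)"
    then have ne: "lam \<noteq> []" and big: "s < lam ! 0 + length lam" by (auto simp: hd_conv_nth)
    have p: "is_partition lam" and dd: "d_distinct d lam" using V by (auto simp: V_def)
    have l0: "0 < length lam" using ne by simp
    have a0: "0 < lam ! 0" using pos[OF p l0] .
    define f where "f j = hook lam 0 j" for j
    define c where "c j = card {k. 0 < k \<and> k < length lam \<and> j < lam ! k}" for j
    have fc: "f j = lam ! 0 - (j + 1) + c j + 1" for j by (simp add: f_def c_def hook_def)
    have "{k. 0 < k \<and> k < length lam \<and> 0 < lam ! k} = {0<..<length lam}"
      using pos[OF p] by auto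
    then have c0: "c 0 = length lam - 1" by (simp add: c_def)
    have f0: "s \<le> f 0" using fc[of 0] c0 big a0 l0 by simp
    have lt0: "lam ! k < lam ! 0" if "0 < k" "k < length lam" for k
      using strict[OF d dd that] .
    have "{k. 0 < k \<and> k < length lam \<and> lam ! 0 - 1 < lam ! k} = {}"
    proof -
      have False if "0 < k" "k < length lam" "lam ! 0 - 1 < lam ! k" for k
        using lt0[OF that(1,2)] that(3) by linarith
      then show ?thesis by blast
    qed
    then have "c (lam ! 0 - 1) = 0" by (simp add: c_def)
    then have fm: "f (lam ! 0 - 1) \<le> s" using fc[of "lam ! 0 - 1"] a0 s by simp
    have step: "\<forall>j<lam ! 0 - 1. f j \<le> f (Suc j) + 2"
    proof (intro allI impI)
      fix j assume jl: "j < lam ! 0 - 1"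
      let ?A = "{k. 0 < k \<and> k < length lam \<and> j < lam ! k}"
      let ?B = "{k. 0 < k \<and> k < length lam \<and> Suc j < lam ! k}"
      let ?E = "{k. k < length lam \<and> lam ! k = Suc j}"
      have sub: "?A \<subseteq> ?B \<union> ?E" by auto
      have fB: "finite ?B" and fE: "finite ?E" by auto
      have "\<forall>a1\<in>?E. \<forall>a2\<in>?E. a1 = a2"
      proof (intro ballI)
        fix a1 a2 assume A: "a1 \<in> ?E" and B: "a2 \<in> ?E"
        show "a1 = a2"
        proof (rule linorder_cases[of a1 a2])
          assume "a1 < a2"
          then have "lam ! a2 < lam ! a1" using strict[OF d dd, of a1 a2] B by simp
          then show ?thesis using A B by simp
        next
          assume "a2 < a1"
          then have "lam ! a1 < lam ! a2" using strict[OF d dd, of a2 a1] A by simp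
          then show ?thesis using A B by simp
        qed
      qed
      then have cE: "card ?E \<le> 1" using card_le_Suc0_iff_eq[OF fE] by simp
      have "card ?A \<le> card (?B \<union> ?E)" using card_mono[OF _ sub] fB fE by blast
      also have "\<dots> \<le> card ?B + card ?E" by (rule card_Un_le)
      finally have "c j \<le> c (Suc j) + 1" using cE unfolding c_def by simp
      then show "f j \<le> f (Suc j) + 2" using fc[of j] fc[of "Suc j"] jl by simp
    qed
    obtain j where jm: "j \<le> lam ! 0 - 1" and fj: "f j = s \<or> f j = Suc s"
      using discrete[OF step f0 fm] by blast
    have "in_diagram lam 0 j" using jm a0 l0 by (simp add: in_diagram_def)
    then show False using core fj unfolding is_core_pair_def no_hook_def f_def by auto
  qed
next
  assume h: "lam = [] \<or> hd lam + length lam \<le> s"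
  have "hook lam i j < s" if ij: "in_diagram lam i j" for i j
  proof -
    have "lam \<noteq> []" using ij by (auto simp: in_diagram_def)
    then have "lam ! 0 + length lam \<le> s" using h by (simp add: hd_conv_nth)
    then show ?thesis using hook_bound[OF d V ij] by simp
  qed
  then show "is_core_pair s lam" unfolding is_core_pair_def no_hook_def
  proof -
    assume H: "\<And>i j. in_diagram lam i j \<Longrightarrow> hook lam i j < s"
    have A: "hook lam i j \<noteq> s" if "in_diagram lam i j" for i j using H[OF that] by simp
    have B: "hook lam i j \<noteq> s + 1" if "in_diagram lam i j" for i j using H[OF that] by simp
    show "(\<forall>i j. in_diagram lam i j \<longrightarrow> hook lam i j \<noteq> s) \<and>
      (\<forall>i j. in_diagram lam i j \<longrightarrow> hook lam i j \<noteq> s + 1)" using A B by blast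
  qed
qed

lemma N_C: "1 \<le> d \<Longrightarrow> 1 \<le> s \<Longrightarrow> N d s = card (C d s)"
proof -
  assume d: "1 \<le> d" and s: "1 \<le> s"
  have "{lam. is_partition lam \<and> d_distinct d lam \<and> is_core_pair s lam} = C d s"
    unfolding C_def using core_char[OF d _ s] by (auto simp: V_def)
  then show ?thesis by (simp add: N_def)
qed

lemma elem_le_hd: "is_partition lam \<Longrightarrow> x \<in> set lam \<Longrightarrow> x \<le> hd lam"
  by (cases lam) (auto simp: is_partition_def)

lemma finite_C: "finite (C d s)"
proof -
  have "C d s \<subseteq> {xs. set xs \<subseteq> {..s} \<and> length xs \<le> s}"
  proof
    fix lam assume "lam \<in> C d s"
    then have V: "V d lam" and h: "lam = [] \<or> hd lam + length lam \<le> s" by (auto simp: C_def)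
    have "x \<le> s" if "x \<in> set lam" for x
      using elem_le_hd[of lam x] V that h by (auto simp: V_def)
    moreover have "length lam \<le> s" using h by auto
    ultimately show "lam \<in> {xs. set xs \<subseteq> {..s} \<and> length xs \<le> s}" by auto
  qed
  then show ?thesis using finite_lists_length_le[of "{..s}" s] finite_subset by blast
qed

lemma C_small: "s \<le> 1 \<Longrightarrow> C d s = {[]}"
proof -
  assume s: "s \<le> 1"
  have "lam = []" if "lam \<in> C d s" for lam
  proof (rule ccontr)
    assume ne: "lam \<noteq> []"
    then have "0 < hd lam" using that pos[of lam 0] by (auto simp: C_def V_def hd_conv_nth)
    then show False using that ne s by (cases lam) (auto simp: C_def)
  qed
  moreover have "[] \<in> C d s" by (simp add: C_def V_def is_partition_def d_distinct_def)
  ultimately show ?thesis by blast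
qed

lemma C_rec:
  assumes s: "2 \<le> s"
  shows "card (C d s) = card (C d (s - 1)) + card (C d (s - (d + 1)))"
proof -
  let ?g = "\<lambda>mu. (s - 1 - length mu) # mu"
  have eq: "C d s = C d (s - 1) \<union> ?g ` C d (s - (d + 1))"
  proof
    show "C d s \<subseteq> C d (s - 1) \<union> ?g ` C d (s - (d + 1))"
    proof
      fix lam assume lam: "lam \<in> C d s"
      show "lam \<in> C d (s - 1) \<union> ?g ` C d (s - (d + 1))"
      proof (cases "lam = [] \<or> hd lam + length lam \<le> s - 1")
        case True then show ?thesis using lam by (auto simp: C_def)
      next
        case False
        then obtain a mu where l: "lam = a # mu" by (cases lam) auto
        have eqs: "a + length mu + 1 = s" using False lam l by (auto simp: C_def)
        have Vl: "V d (a # mu)" using lam l by (simp add: C_def)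
        then have Vm: "V d mu" and a: "0 < a" and hm: "mu \<noteq> [] \<longrightarrow> hd mu + d \<le> a"
          by (auto simp: V_Cons)
        have "mu \<in> C d (s - (d + 1))" using Vm hm eqs by (auto simp: C_def)
        moreover have "lam = ?g mu" using l eqs by simp
        ultimately show ?thesis by blast
      qed
    qed
  next
    show "C d (s - 1) \<union> ?g ` C d (s - (d + 1)) \<subseteq> C d s"
    proof
      fix lam assume "lam \<in> C d (s - 1) \<union> ?g ` C d (s - (d + 1))"
      then consider "lam \<in> C d (s - 1)" | mu where "mu \<in> C d (s - (d + 1))" "lam = ?g mu" by blast
      then show "lam \<in> C d s"
      proof cases
        case 1 then show ?thesis by (auto simp: C_def)
      next
        case (2 mu)
        have Vm: "V d mu" and hm: "mu = [] \<or> hd mu + length mu \<le> s - (d + 1)"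
          using 2 by (auto simp: C_def)
        have cond: "0 < s - 1 - length mu \<and> (mu \<noteq> [] \<longrightarrow> hd mu + d \<le> s - 1 - length mu)"
        proof (cases "mu = []")
          case True then show ?thesis using s by simp
        next
          case False
          have "0 < hd mu" using Vm False pos[of mu 0] by (auto simp: V_def hd_conv_nth)
          then show ?thesis using hm False by auto
        qed
        have "V d lam" using Vm cond 2(2) by (simp add: V_Cons)
        moreover have "length mu + 1 \<le> s"
          using hm s cond by (cases "mu = []") auto
        ultimately show ?thesis using 2(2) by (auto simp: C_def)
      qed
    qed
  qed
  have disj: "C d (s - 1) \<inter> ?g ` C d (s - (d + 1)) = {}"
  proof -
    have "lam \<notin> C d (s - 1)" if L: "lam \<in> ?g ` C d (s - (d + 1))" for lam
    proof -
      obtain mu where mu: "mu \<in> C d (s - (d + 1))" "lam = ?g mu" using L by blast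
      have Vm: "V d mu" and hm: "mu = [] \<or> hd mu + length mu \<le> s - (d + 1)"
        using mu by (auto simp: C_def)
      have "length mu + 1 \<le> s"
      proof (cases "mu = []")
        case True then show ?thesis using s by simp
      next
        case False
        have "0 < hd mu" using Vm False pos[of mu 0] by (auto simp: V_def hd_conv_nth)
        then show ?thesis using hm False by auto
      qed
      then show ?thesis using mu(2) s by (auto simp: C_def)
    qed
    then show ?thesis by blast
  qed
  have inj: "inj_on ?g (C d (s - (d + 1)))" by (rule inj_onI) simp
  have "card (C d s) = card (C d (s - 1)) + card (?g ` C d (s - (d + 1)))"
    unfolding eq by (rule card_Un_disjoint[OF finite_C finite_imageI[OF finite_C] disj])
  then show ?thesis using card_image[OF inj] by simp
qed

lemma C_init: "1 \<le> s \<Longrightarrow> s \<le> d + 1 \<Longrightarrow> card (C d s) = s"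
proof (induction s)
  case 0 then show ?case by simp
next
  case (Suc s)
  show ?case
  proof (cases "s = 0")
    case True then show ?thesis using C_small[of 1 d] by simp
  next
    case False
    have "card (C d (Suc s)) = card (C d s) + card (C d (Suc s - (d + 1)))"
      using C_rec[of "Suc s" d] False by simp
    also have "\<dots> = s + 1" using Suc False C_small[of "Suc s - (d + 1)" d] by simp
    finally show ?thesis by simp
  qed
qed

theorem mainTheorem4:
  fixes d :: nat
  assumes "1 \<le> d"
  shows "(\<forall>s. 1 \<le> s \<and> s \<le> d + 1 \<longrightarrow> N d s = s) \<and>
         (\<forall>s. d + 2 \<le> s \<longrightarrow> N d s = N d (s - 1) + N d (s - (d + 1)))"
proof (intro conjI allI impI)
  fix s assume "1 \<le> s \<and> s \<le> d + 1"
  then show "N d s = s" using N_C[OF assms] C_init by simp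
next
  fix s assume s: "d + 2 \<le> s"
  then show "N d s = N d (s - 1) + N d (s - (d + 1))"
    using N_C[OF assms] C_rec[of s d] assms by simp
qed

end
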